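(* Let $\nu\colon[0,1]\to\mathbb{R}$ be a $C^\infty$ map which is nowhere infinitely flat on $(0,1)$. Then $\nu$ can be approximated arbitrarily well in the $C^\infty$ topology by $C^\infty$ maps $\tilde\nu\colon[0,1]\to\mathbb{R}$ which are nowhere infinitely flat on $(0,1)$, have the same $\infty$-jets as $\nu$ at $0$ and $1$, and have finitely many zeros.
   Context: A map is infinitely flat at a point if all its derivatives (including the value) vanish there. *)

theory Defs
  imports "HOL-Analysis.Analysis"
begin

text \<open>Since [0,1] has no isolated
  points, the D j are uniquely determined on [0,1].\<close>
definition smooth_derivs_01 :: "(real \<Rightarrow> real) \<Rightarrow> (nat \<Rightarrow> real \<Rightarrow> real) \<Rightarrow> bool" where
  "smooth_derivs_01 f D \<longleftrightarrow>
     (\<forall>x\<in>{0..1}. D 0 x = f x) \<and>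
     (\<forall>j. \<forall>x\<in>{0..1}. (D j has_real_derivative D (Suc j) x) (at x within {0..1}))"

definition inf_flat_at :: "(nat \<Rightarrow> real \<Rightarrow> real) \<Rightarrow> real \<Rightarrow> bool" where
  "inf_flat_at D x \<longleftrightarrow> (\<forall>j. D j x = 0)"

end

theory Submission
  imports Defs "HOL-Computational_Algebra.Polynomial"
begin

definition dseq :: "real set \<Rightarrow> (nat \<Rightarrow> real \<Rightarrow> real) \<Rightarrow> bool" where
  "dseq S F \<longleftrightarrow> (\<forall>j. \<forall>x\<in>S. (F j has_real_derivative F (Suc j) x) (at x within S))"

lemma dseqD: "dseq S F \<Longrightarrow> x \<in> S \<Longrightarrow> (F j has_real_derivative F (Suc j) x) (at x within S)"
  by (simp add: dseq_def)

lemma dseq_add: "dseq S F \<Longrightarrow> dseq S G \<Longrightarrow> dseq S (\<lambda>j x. F j x + G j x)"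
  unfolding dseq_def by (auto intro!: derivative_eq_intros)

lemma dseq_diff: "dseq S F \<Longrightarrow> dseq S G \<Longrightarrow> dseq S (\<lambda>j x. F j x - G j x)"
  unfolding dseq_def by (auto intro!: derivative_eq_intros)

lemma dseq_cmult: "dseq S F \<Longrightarrow> dseq S (\<lambda>j x. c * F j x)"
  unfolding dseq_def by (auto intro!: derivative_eq_intros)

lemma dseq_subset: "dseq T F \<Longrightarrow> S \<subseteq> T \<Longrightarrow> dseq S F"
  unfolding dseq_def by (meson has_field_derivative_subset subsetD)

lemma dseq_cont: "dseq S F \<Longrightarrow> continuous_on S (F j)"
  unfolding dseq_def
  by (meson DERIV_continuous continuous_on_eq_continuous_within)

lemma leib_sum:
  fixes F G :: "nat \<Rightarrow> real"
  shows "(\<Sum>i = 0..n. real (n choose i) * (F (Suc i) * G (n-i) + F i * G (Suc (n-i)))) =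
         (\<Sum>i = 0..Suc n. real (Suc n choose i) * F i * G (Suc n - i))"
proof -
  have e1: "(\<Sum>i = 0..n. real (n choose i) * F i * G (Suc (n-i))) =
        (\<Sum>i = 0..Suc n. real (n choose i) * F i * G (Suc n - i))"
    by (simp add: sum.atLeast0_atMost_Suc Suc_diff_le)
  also have "\<dots> = F 0 * G (Suc n) + (\<Sum>i = 0..n. real (n choose Suc i) * F (Suc i) * G (n - i))"
    by (subst sum.atLeast0_atMost_Suc_shift) simp
  finally have e1': "(\<Sum>i = 0..n. real (n choose i) * F i * G (Suc (n-i))) = F 0 * G (Suc n) + (\<Sum>i = 0..n. real (n choose Suc i) * F (Suc i) * G (n - i))" .
  have "(\<Sum>i = 0..Suc n. real (Suc n choose i) * F i * G (Suc n - i)) =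
        F 0 * G (Suc n) + (\<Sum>i = 0..n. real (Suc n choose Suc i) * F (Suc i) * G (n - i))"
    by (subst sum.atLeast0_atMost_Suc_shift) simp
  also have "\<dots> = F 0 * G (Suc n) + (\<Sum>i = 0..n. real (n choose i) * F (Suc i) * G (n - i))
      + (\<Sum>i = 0..n. real (n choose Suc i) * F (Suc i) * G (n - i))"
    by (simp add: sum.distrib algebra_simps)
  finally show ?thesis using e1'
    by (simp add: sum.distrib algebra_simps)
qed

lemma dseq_mult:
  assumes "dseq S F" "dseq S G"
  shows "dseq S (\<lambda>j x. \<Sum>i = 0..j. real (j choose i) * F i x * G (j-i) x)"
  unfolding dseq_def
proof (intro allI ballI)
  fix j x assume x: "x \<in> S"
  have "((\<lambda>x. \<Sum>i = 0..j. real (j choose i) * F i x * G (j-i) x) has_real_derivative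
        (\<Sum>i = 0..j. real (j choose i) * (F (Suc i) x * G (j-i) x + F i x * G (Suc (j-i)) x))) (at x within S)"
    apply (rule derivative_eq_intros)
    apply (rule derivative_eq_intros dseqD[OF assms(1) x] dseqD[OF assms(2) x] | simp)+
    apply (simp add: algebra_simps)
    done
  then show "((\<lambda>x. \<Sum>i = 0..j. real (j choose i) * F i x * G (j-i) x) has_real_derivative
        (\<Sum>i = 0..Suc j. real (Suc j choose i) * F i x * G (Suc j - i) x)) (at x within S)"
    using leib_sum[of j "\<lambda>i. F i x" "\<lambda>i. G i x"] by simp
qed


lemma polyexp_lim: "((\<lambda>z::real. poly q z * exp (-z)) \<longlongrightarrow> 0) at_top"
proof -
  have "((\<lambda>z::real. \<Sum>i\<le>degree q. coeff q i * (z ^ i / exp z)) \<longlongrightarrow> (\<Sum>i\<le>degree q. coeff q i * 0)) at_top"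
    by (intro tendsto_sum tendsto_mult tendsto_const tendsto_power_div_exp_0)
  then show ?thesis
    by (simp add: poly_altdef sum_divide_distrib exp_minus field_simps)
qed

fun PP :: "nat \<Rightarrow> real poly" where
  "PP 0 = 1"
| "PP (Suc j) = [:0,0,1:] * (PP j - pderiv (PP j))"

definition FF :: "nat \<Rightarrow> real \<Rightarrow> real" where
  "FF j x = (if x > 0 then poly (PP j) (1/x) * exp (-1/x) else 0)"

lemma FF_deriv_pos:
  assumes "x > 0" shows "(FF j has_real_derivative FF (Suc j) x) (at x)"
proof -
  have "((\<lambda>x. poly (PP j) (1/x) * exp (-1/x)) has_real_derivative
        poly (pderiv (PP j)) (1/x) * (- 1 / x^2) * exp (-1/x) + poly (PP j) (1/x) * (exp (-1/x) * (1/x^2))) (at x)"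
    using assms
    apply (intro derivative_eq_intros DERIV_chain2[OF poly_DERIV])
    apply (auto simp: power2_eq_square)
    done
  moreover have "poly (pderiv (PP j)) (1/x) * (- 1 / x^2) * exp (-1/x) + poly (PP j) (1/x) * (exp (-1/x) * (1/x^2))
      = FF (Suc j) x"
    using assms by (simp add: FF_def algebra_simps power2_eq_square)
  ultimately have d: "((\<lambda>x. poly (PP j) (1/x) * exp (-1/x)) has_real_derivative FF (Suc j) x) (at x)" by simp
  show ?thesis
    by (rule has_field_derivative_transform_within_open[OF d, of "{0<..}"]) (use assms in \<open>auto simp: FF_def\<close>)
qed

lemma FF_deriv_neg:
  assumes "x < 0" shows "(FF j has_real_derivative FF (Suc j) x) (at x)"
proof -
  have "((\<lambda>_. 0) has_real_derivative 0) (at x)" by simp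
  then have "(FF j has_real_derivative 0) (at x)"
    by (rule has_field_derivative_transform_within_open[of _ _ _ "{..<0}"]) (use assms in \<open>auto simp: FF_def\<close>)
  then show ?thesis using assms by (simp add: FF_def)
qed

lemma FF_deriv_0: "(FF j has_real_derivative FF (Suc j) 0) (at 0)"
proof -
  have r: "((\<lambda>y. FF j y / y) \<longlongrightarrow> 0) (at_right 0)"
  proof -
    have lim: "((\<lambda>z::real. poly (pCons 0 (PP j)) z * exp (-z)) \<longlongrightarrow> 0) at_top" by (rule polyexp_lim)
    have ev1: "\<forall>\<^sub>F z in at_top. poly (pCons 0 (PP j)) z * exp (-z) = FF j (inverse z) / inverse z"
    proof (rule eventually_mono[OF eventually_gt_at_top[of 0]])
      fix z :: real assume z: "0 < z"
      have "FF j (inverse z) = poly (PP j) z * exp (-z)"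
        using z by (simp add: FF_def divide_inverse)
      then show "poly (pCons 0 (PP j)) z * exp (-z) = FF j (inverse z) / inverse z"
        by (simp add: divide_inverse)
    qed
    have "((\<lambda>z. FF j (inverse z) / inverse z) \<longlongrightarrow> 0) at_top"
      using tendsto_cong[OF ev1, THEN iffD1, OF lim] .
    then show ?thesis by (rule filterlim_at_right_to_top[THEN iffD2])
  qed
  have ev: "\<forall>\<^sub>F y in at_left (0::real). 0 = FF j y / y"
    unfolding eventually_at_left_field
    by (rule exI[of _ "-1"]) (auto simp: FF_def)
  have l: "((\<lambda>y. FF j y / y) \<longlongrightarrow> 0) (at_left 0)"
    using tendsto_cong[OF ev, THEN iffD1, OF tendsto_const] .
  have "((\<lambda>y. FF j y / y) \<longlongrightarrow> 0) (at 0)"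
    using l r by (rule filterlim_split_at)
  then have "((\<lambda>y. (FF j y - FF j 0) / (y - 0)) \<longlongrightarrow> 0) (at 0)" by (simp add: FF_def)
  then show ?thesis by (simp add: has_field_derivative_iff FF_def)
qed

lemma FF_deriv: "(FF j has_real_derivative FF (Suc j) x) (at x)"
  using FF_deriv_0 FF_deriv_neg FF_deriv_pos by (cases "x < 0"; cases "x = 0") auto

lemma FF_pos: "x > 0 \<Longrightarrow> FF 0 x > 0" by (simp add: FF_def)
lemma FF_nonpos: "x \<le> 0 \<Longrightarrow> FF j x = 0" by (simp add: FF_def)


lemma dseq_FF: "dseq UNIV FF"
  unfolding dseq_def using FF_deriv by simp

lemma dseq_affine:
  assumes "dseq UNIV F"
  shows "dseq UNIV (\<lambda>j x. c ^ j * F j (c * x + d))"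
  unfolding dseq_def
proof (intro allI ballI)
  fix j x
  have "(F j has_real_derivative F (Suc j) (c * x + d)) (at (c * x + d))"
    using assms by (simp add: dseq_def)
  then have "((\<lambda>x. F j (c * x + d)) has_real_derivative F (Suc j) (c * x + d) * c) (at x)"
    by (rule DERIV_chain2) (auto intro!: derivative_eq_intros)
  then show "((\<lambda>x. c ^ j * F j (c * x + d)) has_real_derivative c ^ Suc j * F (Suc j) (c * x + d)) (at x within UNIV)"
    by (auto intro!: derivative_eq_intros simp: algebra_simps)
qed



definition RR :: "nat \<Rightarrow> real \<Rightarrow> real" where
  "RR j x = (-1) ^ j * FF j ((-1) * x + 1)"

lemma dseq_RR: "dseq UNIV RR"
  unfolding RR_def by (rule dseq_affine[OF dseq_FF])

definition BB :: "nat \<Rightarrow> real \<Rightarrow> real" where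
  "BB j x = (\<Sum>i = 0..j. real (j choose i) * FF i x * RR (j-i) x)"

lemma dseq_BB: "dseq UNIV BB"
  unfolding BB_def[abs_def] by (rule dseq_mult[OF dseq_FF dseq_RR])

lemma BB_out: "x \<le> 0 \<or> x \<ge> 1 \<Longrightarrow> BB j x = 0"
  by (auto simp: BB_def RR_def FF_nonpos intro!: sum.neutral)

lemma BB0: "BB 0 x = FF 0 x * FF 0 (1 - x)"
  by (simp add: BB_def RR_def)

lemma BB0_pos: "0 < x \<Longrightarrow> x < 1 \<Longrightarrow> BB 0 x > 0"
  by (simp add: BB0 FF_pos)

lemma BB0_nonneg: "BB 0 x \<ge> 0"
  by (simp add: BB0 FF_def)

definition Phi :: "real \<Rightarrow> real" where
  "Phi x = integral {-1..x} (BB 0)"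

lemma contBB: "continuous_on S (BB j)"
  using dseq_cont[OF dseq_BB] continuous_on_subset by blast

lemma Phi_nonpos: "x \<le> 0 \<Longrightarrow> Phi x = 0"
proof (cases "x < -1")
  case True then show ?thesis by (simp add: Phi_def)
next
  case False
  assume "x \<le> 0"
  have "integral {-1..x} (BB 0) = integral {-1..x} (\<lambda>_. 0)"
    by (rule integral_cong) (use \<open>x \<le> 0\<close> in \<open>auto simp: BB_out\<close>)
  then show ?thesis by (simp add: Phi_def)
qed

lemma Phi_deriv: "(Phi has_real_derivative BB 0 x) (at x)"
proof (cases "x < 0")
  case True
  have "((\<lambda>_. 0) has_real_derivative 0) (at x)" by simp
  then have "(Phi has_real_derivative 0) (at x)"
    by (rule has_field_derivative_transform_within_open[of _ _ _ "{..<0}"]) (use True in \<open>auto simp: Phi_nonpos\<close>)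
  then show ?thesis using True by (simp add: BB_out)
next
  case False
  have "(Phi has_real_derivative BB 0 x) (at x within {-1..x+1})"
    unfolding Phi_def by (rule integral_has_real_derivative[OF contBB]) (use False in auto)
  moreover have "at x within {-1..x+1} = at x"
    by (rule at_within_interior) (use False in auto)
  ultimately show ?thesis by simp
qed

lemma Phi1_pos: "Phi 1 > 0"
proof -
  obtain z where z: "0 < z" "z < 1" "Phi 1 - Phi 0 = (1 - 0) * BB 0 z"
    using MVT2[of 0 1 Phi "BB 0"] Phi_deriv by auto
  then show ?thesis using BB0_pos[OF z(1,2)] by (simp add: Phi_nonpos)
qed

lemma Phi_ge1: "x \<ge> 1 \<Longrightarrow> Phi x = Phi 1"
proof (cases "x = 1")
  case False
  assume "x \<ge> 1"
  then have "1 < x" using False by simp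
  then obtain z where z: "1 < z" "z < x" "Phi x - Phi 1 = (x - 1) * BB 0 z"
    using MVT2[of 1 x Phi "BB 0"] Phi_deriv by auto
  then show ?thesis by (simp add: BB_out)
qed simp

lemma Phi_less1: "x < 1 \<Longrightarrow> Phi x < Phi 1"
proof (cases "x \<le> 0")
  case True
  then show ?thesis using Phi1_pos by (simp add: Phi_nonpos)
next
  case False
  assume "x < 1"
  obtain z where z: "x < z" "z < 1" "Phi 1 - Phi x = (1 - x) * BB 0 z"
    using MVT2[of x 1 Phi "BB 0"] Phi_deriv \<open>x < 1\<close> by auto
  then have "BB 0 z > 0" using False by (intro BB0_pos) auto
  then show ?thesis using z \<open>x < 1\<close> by (smt (verit) mult_pos_pos)
qed

definition Psi0 :: "nat \<Rightarrow> real \<Rightarrow> real" where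
  "Psi0 j x = (if j = 0 then 1 - Phi x / Phi 1 else - BB (j - 1) x / Phi 1)"

lemma dseq_Psi0: "dseq UNIV Psi0"
  unfolding dseq_def
proof (intro allI ballI)
  fix j x
  show "(Psi0 j has_real_derivative Psi0 (Suc j) x) (at x within UNIV)"
  proof (cases j)
    case 0
    then show ?thesis unfolding Psi0_def using Phi1_pos
      by (auto intro!: derivative_eq_intros Phi_deriv)
  next
    case (Suc i)
    have "(BB i has_real_derivative BB (Suc i) x) (at x)"
      using dseq_BB by (simp add: dseq_def)
    then show ?thesis unfolding Psi0_def using Suc Phi1_pos
      by (auto intro!: derivative_eq_intros)
  qed
qed

lemma Psi0_le0: "x \<le> 0 \<Longrightarrow> Psi0 j x = (if j = 0 then 1 else 0)"
  by (simp add: Psi0_def Phi_nonpos BB_out)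

lemma Psi0_ge1: assumes "x \<ge> 1" shows "Psi0 j x = 0"
proof -
  have "Phi x = Phi 1" using assms by (rule Phi_ge1)
  then show ?thesis using Phi1_pos assms by (simp add: Psi0_def BB_out)
qed

lemma Psi0_pos: "x < 1 \<Longrightarrow> Psi0 0 x > 0"
  using Phi_less1[of x] Phi1_pos by (simp add: Psi0_def field_simps)

lemma Psi0_bounded: "\<exists>M\<ge>0. \<forall>j\<le>k. \<forall>x\<in>{-1..1}. \<bar>Psi0 j x\<bar> \<le> M"
proof -
  have "\<exists>M. \<forall>x\<in>{-1..1}. \<bar>Psi0 j x\<bar> \<le> M" for j
  proof -
    have "compact (Psi0 j ` {-1..1})"
      by (rule compact_continuous_image[OF dseq_cont[OF dseq_subset[OF dseq_Psi0]]]) auto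
    then obtain M where "\<forall>y\<in>Psi0 j ` {-1..1}. norm y \<le> M"
      using compact_imp_bounded bounded_iff by metis
    then show ?thesis by auto
  qed
  then obtain M where M: "\<And>j. \<forall>x\<in>{-1..1}. \<bar>Psi0 j x\<bar> \<le> M j" by metis
  have Mnn: "M i \<ge> 0" for i using M[of i] by force
  have "\<bar>Psi0 j x\<bar> \<le> (\<Sum>i\<le>k. M i)" if "j \<le> k" "x \<in> {-1..1}" for j x
  proof -
    have "\<bar>Psi0 j x\<bar> \<le> M j" using M that by auto
    also have "\<dots> \<le> (\<Sum>i\<le>k. M i)" using that by (intro member_le_sum) (auto simp: Mnn)
    finally show ?thesis .
  qed
  moreover have "(\<Sum>i\<le>k. M i) \<ge> 0" by (simp add: Mnn sum_nonneg)
  ultimately show ?thesis by blast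
qed



lemma sard1:
  fixes F F1 :: "real \<Rightarrow> real"
  assumes der: "\<And>x. x \<in> S \<Longrightarrow> (F has_real_derivative F1 x) (at x within S)"
  shows "negligible (F ` {x\<in>S. F1 x = 0})"
proof -
  define T where "T = {x\<in>S. F1 x = 0}"
  define S1 where "S1 = (vec :: real \<Rightarrow> real^1) ` T"
  define g where "g = (\<lambda>v::real^1. (vec (F (v $ 1)) :: real^1))"
  have "negligible (g ` S1)"
  proof (rule baby_Sard[where f' = "\<lambda>x h. 0"])
    show "CARD(1) \<le> CARD(1)" by simp
  next
    fix v assume v: "v \<in> S1"
    then obtain x where x: "x \<in> T" "v = vec x" by (auto simp: S1_def)
    have z0: "((*) (0::real)) = (\<lambda>h. 0)" by (rule ext) simp
    have d1: "((\<lambda>v::real^1. v $ 1) has_derivative (\<lambda>h. h $ 1)) (at v within S1)"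
      by (rule bounded_linear_imp_has_derivative) (rule bounded_linear_vec_nth)
    have "x \<in> S" using x(1) by (simp add: T_def)
    then have "(F has_real_derivative F1 x) (at x within S)" by (rule der)
    then have "(F has_real_derivative F1 x) (at x within T)"
      by (rule has_field_derivative_subset) (auto simp: T_def)
    then have d2: "(F has_derivative (\<lambda>h. 0)) (at ((\<lambda>v::real^1. v $ 1) v) within ((\<lambda>v::real^1. v $ 1) ` S1))"
      using x by (simp add: S1_def image_image T_def has_field_derivative_def z0)
    have d3: "((\<lambda>r. vec r :: real^1) has_derivative (\<lambda>r. vec r)) (at ((F \<circ> (\<lambda>v::real^1. v $ 1)) v) within ((F \<circ> (\<lambda>v::real^1. v $ 1)) ` S1))"
      by (rule bounded_linear_imp_has_derivative) (metis linear_conv_bounded_linear linear_vec)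
    have "((\<lambda>r. vec r :: real^1) \<circ> (F \<circ> (\<lambda>v::real^1. v $ 1)) has_derivative ((\<lambda>r. vec r) \<circ> ((\<lambda>h. 0) \<circ> (\<lambda>h. h $ 1)))) (at v within S1)"
      by (rule diff_chain_within[OF diff_chain_within[OF d1 d2] d3])
    then show "(g has_derivative (\<lambda>h. 0)) (at v within S1)"
      by (simp add: g_def o_def)
  next
    fix v assume "v \<in> S1"
    show "rank (matrix (\<lambda>h::real^1. 0::real^1)) < CARD(1)"
    proof -
      have "matrix (\<lambda>h::real^1. 0::real^1) = 0" by (simp add: matrix_def vec_eq_iff)
      then show ?thesis by simp
    qed
  qed
  moreover have "F ` T = (\<lambda>w::real^1. w $ 1) ` (g ` S1)"
    by (auto simp: g_def S1_def image_image)
  ultimately have "negligible ((\<lambda>w::real^1. w $ 1) ` (g ` S1))" 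
    by (intro negligible_differentiable_image_negligible[of "g ` S1" "\<lambda>w::real^1. w $ 1"]) (auto intro!: bounded_linear_imp_differentiable_on)
  then show ?thesis using \<open>F ` T = _\<close> by (simp add: T_def)
qed



lemma flat_bound:
  assumes G: "dseq {0..1} G" and z: "\<And>j. G j 0 = 0"
  shows "\<exists>K\<ge>0. \<forall>m\<le>k. \<forall>x\<in>{0..1}. \<bar>G m x\<bar> \<le> K * x ^ (k + 1 - m)"
proof -
  have "compact (G (k+1) ` {0..1})"
    by (rule compact_continuous_image[OF dseq_cont[OF G]]) auto
  then obtain K0 where K0: "\<forall>y\<in>G (k+1) ` {0..1}. norm y \<le> K0"
    using compact_imp_bounded bounded_iff by metis
  define K where "K = max K0 0"
  have K: "\<And>x. x \<in> {0..1} \<Longrightarrow> \<bar>G (k+1) x\<bar> \<le> K" "K \<ge> 0"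
    using K0 by (auto simp: K_def intro: le_max_iff_disj[THEN iffD2])
  have main: "n \<le> k + 1 \<Longrightarrow> \<forall>x\<in>{0..1}. \<bar>G (k + 1 - n) x\<bar> \<le> K * x ^ n" for n
  proof (induction n)
    case 0 then show ?case using K by simp
  next
    case (Suc n)
    define m where "m = k - n"
    have m: "Suc m = k + 1 - n" "k + 1 - Suc n = m" using Suc.prems by (auto simp: m_def)
    show ?case
    proof
      fix x :: real assume x: "x \<in> {0..1}"
      have "norm (G m x - G m 0) \<le> (K * x ^ n) * norm (x - 0)"
      proof (rule field_differentiable_bound[where S = "{0..x}" and f' = "G (Suc m)"])
        show "convex {0..x}" by simp
      next
        fix z assume "z \<in> {0..x}"
        then have "z \<in> {0..1}" using x by auto
        then have "(G m has_field_derivative G (Suc m) z) (at z within {0..1})"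
          by (rule dseqD[OF G])
        then show "(G m has_field_derivative G (Suc m) z) (at z within {0..x})"
          by (rule has_field_derivative_subset) (use x in auto)
      next
        fix z assume zz: "z \<in> {0..x}"
        then have "\<bar>G (Suc m) z\<bar> \<le> K * z ^ n" using Suc.IH Suc.prems x m(1) by auto
        also have "\<dots> \<le> K * x ^ n" using zz K(2) by (auto intro!: mult_left_mono power_mono)
        finally show "norm (G (Suc m) z) \<le> K * x ^ n" by simp
      qed (use x in auto)
      then show "\<bar>G (k + 1 - Suc n) x\<bar> \<le> K * x ^ Suc n"
        using x z m(2) by (simp add: algebra_simps real_norm_def)
    qed
  qed
  show ?thesis
  proof (intro exI conjI allI impI ballI)
    fix m x assume "m \<le> k" "x \<in> {0..1::real}"
    then show "\<bar>G m x\<bar> \<le> K * x ^ (k + 1 - m)"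
      using main[of "k + 1 - m"] by auto
  qed (use K in auto)
qed

lemma rolle01:
  assumes G: "dseq {0..1} G" and pq: "0 \<le> p" "p < q" "q \<le> 1" "G j p = 0" "G j q = 0"
  shows "\<exists>z. p < z \<and> z < q \<and> G (Suc j) z = 0"
proof -
  have "\<exists>z. p < z \<and> z < q \<and> DERIV (G j) z :> 0"
  proof (rule Rolle)
    show "continuous_on {p..q} (G j)"
      by (rule continuous_on_subset[OF dseq_cont[OF G]]) (use pq in auto)
  next
    fix x assume "p < x" "x < q"
    then have "(G j has_real_derivative G (Suc j) x) (at x)"
      using dseqD[OF G, of x j] pq at_within_interior[of x "{0..1}"] by auto
    then show "G j differentiable (at x)" using real_differentiable_def by blast
  qed (use pq in auto)
  then obtain z where z: "p < z" "z < q" "DERIV (G j) z :> 0" by blast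
  have "(G j has_real_derivative G (Suc j) z) (at z)"
    using dseqD[OF G, of z j] pq z at_within_interior[of z "{0..1}"] by auto
  then have "G (Suc j) z = 0" using z(3) DERIV_unique by blast
  then show ?thesis using z by blast
qed

lemma pair_pts:
  fixes u v x e :: real
  assumes "u \<noteq> v" "(x < u \<and> x < v) \<or> (u < x \<and> v < x)" "\<bar>u - x\<bar> < e" "\<bar>v - x\<bar> < e"
  shows "\<exists>p q. (p = u \<or> p = v) \<and> (q = u \<or> q = v) \<and> p < q \<and> (x < p \<or> q < x) \<and> \<bar>p - x\<bar> < e \<and> \<bar>q - x\<bar> < e"
proof (cases "u < v")
  case True then show ?thesis using assms by (intro exI[of _ u] exI[of _ v]) auto
next
  case False then have "v < u" using assms(1) by simp
  then show ?thesis using assms by (intro exI[of _ v] exI[of _ u]) auto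
qed

lemma three_pts:
  fixes a b c x e :: real
  assumes "a \<noteq> x" "b \<noteq> x" "c \<noteq> x" "\<bar>a - x\<bar> < e" "\<bar>b - x\<bar> < \<bar>a - x\<bar>" "\<bar>c - x\<bar> < \<bar>b - x\<bar>"
  shows "\<exists>p q. p \<in> {a, b, c} \<and> q \<in> {a, b, c} \<and> p < q \<and> (x < p \<or> q < x) \<and> \<bar>p - x\<bar> < e \<and> \<bar>q - x\<bar> < e"
proof -
  have ab: "a \<noteq> b" "b \<noteq> c" "a \<noteq> c" using assms by auto
  have eb: "\<bar>b - x\<bar> < e" "\<bar>c - x\<bar> < e" using assms by auto
  consider "(x < a \<and> x < b) \<or> (a < x \<and> b < x)" | "(x < a \<and> x < c) \<or> (a < x \<and> c < x)"
    | "(x < b \<and> x < c) \<or> (b < x \<and> c < x)"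
    using assms(1-3) by linarith
  then show ?thesis
  proof cases
    case 1 then show ?thesis using pair_pts[of a b x e] ab eb assms(4) by blast
  next
    case 2 then show ?thesis using pair_pts[of a c x e] ab eb assms(4) by blast
  next
    case 3 then show ?thesis using pair_pts[of b c x e] ab eb assms(4) by blast
  qed
qed

lemma limpt_step:
  assumes G: "dseq {0..1} G" and x: "x \<in> {0..1}" and l: "x islimpt {y\<in>{0..1}. G j y = 0}"
  shows "G j x = 0" "x islimpt {y\<in>{0..1}. G (Suc j) y = 0}"
proof -
  have "closed {y\<in>{0..1}. G j y = 0}"
    by (rule continuous_closed_preimage_constant[OF dseq_cont[OF G]]) auto
  then show "G j x = 0" using l closed_limpt by blast
next
  show "x islimpt {y\<in>{0..1}. G (Suc j) y = 0}"
    unfolding islimpt_approachable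
  proof (intro allI impI)
    fix e :: real assume e: "e > 0"
    let ?Z = "{y\<in>{0..1}. G j y = 0}"
    obtain y1 where y1: "y1 \<in> ?Z" "y1 \<noteq> x" "dist y1 x < e" using l e islimpt_approachable by blast
    have "dist y1 x > 0" using y1(2) by simp
    then obtain y2 where y2: "y2 \<in> ?Z" "y2 \<noteq> x" "dist y2 x < dist y1 x"
      using l[unfolded islimpt_approachable] by blast
    have "dist y2 x > 0" using y2(2) by simp
    then obtain y3 where y3: "y3 \<in> ?Z" "y3 \<noteq> x" "dist y3 x < dist y2 x"
      using l[unfolded islimpt_approachable] by blast
    have "\<exists>p q. p \<in> ?Z \<and> q \<in> ?Z \<and> p < q \<and> (x < p \<or> q < x) \<and> dist p x < e \<and> dist q x < e"
    proof -
      obtain p q where "p \<in> {y1, y2, y3}" "q \<in> {y1, y2, y3}" "p < q" "x < p \<or> q < x" "\<bar>p - x\<bar> < e" "\<bar>q - x\<bar> < e"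
        using three_pts[of y1 x y2 y3 e] y1(2,3) y2(2,3) y3(2,3) unfolding dist_real_def by blast
      moreover have "{y1, y2, y3} \<subseteq> ?Z" using y1(1) y2(1) y3(1) by blast
      ultimately show ?thesis unfolding dist_real_def by blast
    qed
    then obtain p q where pq: "p \<in> ?Z" "q \<in> ?Z" "p < q" "x < p \<or> q < x" "dist p x < e" "dist q x < e"
      by blast
    then obtain z where z: "p < z" "z < q" "G (Suc j) z = 0"
      using rolle01[OF G, of p q j] by auto
    show "\<exists>x'\<in>{y\<in>{0..1}. G (Suc j) y = 0}. x' \<noteq> x \<and> dist x' x < e"
      using pq z by (intro bexI[of _ z]) (auto simp: dist_real_def)
  qed
qed

lemma limpt_flat:
  assumes G: "dseq {0..1} G" and x: "x \<in> {0..1}" and l: "x islimpt {y\<in>{0..1}. G 0 y = 0}"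
  shows "G j x = 0"
proof -
  have "x islimpt {y\<in>{0..1}. G j y = 0}" for j
    by (induction j) (use l limpt_step(2)[OF G x] in auto)
  then show ?thesis using limpt_step(1)[OF G x] by blast
qed



lemma term_bound:
  fixes a x M K p q :: real
  assumes a: "0 < a" "a \<le> 1/4" and x: "0 \<le> x" "x < 2 * a"
    and p: "\<bar>p\<bar> \<le> (1/a) ^ i * M" and q: "\<bar>q\<bar> \<le> K * x ^ (k + 1 - m)"
    and M: "M \<ge> 0" and K: "K \<ge> 0" and im: "i + m \<le> k"
  shows "\<bar>p * q\<bar> \<le> M * K * 2 ^ (k + 1) * a"
proof -
  have x1: "x \<le> 1" using a x by simp
  have "x ^ (k + 1 - m) \<le> x ^ (i + 1)"
    by (rule power_decreasing) (use im x x1 in auto)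
  also have "\<dots> \<le> (2 * a) ^ (i + 1)"
    by (rule power_mono) (use x in auto)
  finally have xq: "x ^ (k + 1 - m) \<le> (2 * a) ^ (i + 1)" .
  have "\<bar>p * q\<bar> = \<bar>p\<bar> * \<bar>q\<bar>" by (simp add: abs_mult)
  also have "\<dots> \<le> ((1/a) ^ i * M) * (K * (2 * a) ^ (i + 1))"
    apply (rule mult_mono[OF p])
      apply (rule order.trans[OF q]) apply (rule mult_left_mono[OF xq K])
    using M a by auto
  also have "\<dots> = M * K * 2 ^ (i + 1) * a"
    using a by (simp add: power_mult_distrib field_simps power_add)
  also have "\<dots> \<le> M * K * 2 ^ (k + 1) * a"
    using M K a im by (intro mult_right_mono mult_left_mono power_increasing) auto
  finally show ?thesis .
qed

lemma lemA_flat: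
  assumes S: "dseq {0..1} D" and nf: "\<forall>x\<in>{0<..<1}. \<exists>j. D j x \<noteq> 0"
    and fl: "\<And>j. D j 0 = 0" and e: "\<epsilon> > 0"
  shows "\<exists>D'. dseq {0..1} D' \<and> (\<forall>x\<in>{0<..<1}. \<exists>j. D' j x \<noteq> 0) \<and> (\<forall>j. D' j 0 = D j 0) \<and>
    (\<forall>j. \<forall>x\<in>{1/2..1}. D' j x = D j x) \<and> (\<exists>b>0. \<forall>x\<in>{0<..b}. D' 0 x \<noteq> 0) \<and>
    (\<forall>j\<le>k. \<forall>x\<in>{0..1}. \<bar>D' j x - D j x\<bar> < \<epsilon>)"
proof -
  obtain M where M: "M \<ge> 0" "\<And>j x. j \<le> k \<Longrightarrow> x \<in> {-1..1} \<Longrightarrow> \<bar>Psi0 j x\<bar> \<le> M"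
    using Psi0_bounded[of k] by blast
  have SF: "dseq {0..1} FF" using dseq_subset[OF dseq_FF] by blast
  obtain KD where KD: "KD \<ge> 0" "\<And>m x. m \<le> k \<Longrightarrow> x \<in> {0..1} \<Longrightarrow> \<bar>D m x\<bar> \<le> KD * x ^ (k + 1 - m)"
    using flat_bound[OF S fl, of k] by blast
  obtain KF where KF: "KF \<ge> 0" "\<And>m x. m \<le> k \<Longrightarrow> x \<in> {0..1} \<Longrightarrow> \<bar>FF m x\<bar> \<le> KF * x ^ (k + 1 - m)"
    using flat_bound[OF SF, of k] by (auto simp: FF_nonpos)
  define K where "K = 2 * KF + KD"
  have K: "K \<ge> 0" using KD KF by (simp add: K_def)
  define C where "C = 4 ^ (k + 1) * (M + 1) * (K + 1)"
  have C: "C > 0" using M K by (simp add: C_def)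
  define a where "a = min (1/4) (\<epsilon> / (2 * C))"
  have a: "0 < a" "a \<le> 1/4" "C * a \<le> \<epsilon> / 2"
    using C e by (auto simp: a_def min_def field_simps)
  define PSI where "PSI = (\<lambda>j x. (1/a) ^ j * Psi0 j ((1/a) * x + (-1)))"
  have SP: "dseq UNIV PSI" unfolding PSI_def by (rule dseq_affine[OF dseq_Psi0])
  have PSI_hi: "PSI j x = 0" if "x \<ge> 2 * a" for j x
  proof -
    have "(1/a) * x + (-1) \<ge> 1" using that a by (simp add: field_simps)
    then show ?thesis by (simp add: PSI_def Psi0_ge1)
  qed
  have PSI_lo: "PSI j x = (if j = 0 then 1 else 0)" if "x \<le> a" for j x
  proof -
    have "(1/a) * x + (-1) \<le> 0" using that a by (simp add: field_simps)
    then show ?thesis by (simp add: PSI_def Psi0_le0)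
  qed
  have PSI_pos: "PSI 0 x > 0" if "x < 2 * a" for x
  proof -
    have "(1/a) * x + (-1) < 1" using that a by (simp add: field_simps)
    then show ?thesis by (simp add: PSI_def Psi0_pos)
  qed
  have PSI_bd: "\<bar>PSI j x\<bar> \<le> (1/a) ^ j * M" if "j \<le> k" "0 \<le> x" "x \<le> 2 * a" for j x
  proof -
    have "(1/a) * x + (-1) \<in> {-1..1}" using that a by (auto simp: field_simps)
    then have "\<bar>Psi0 j ((1/a) * x + (-1))\<bar> \<le> M" using M that by blast
    then show ?thesis using a by (simp add: PSI_def abs_mult mult_left_mono)
  qed
  have atD: "(D j has_real_derivative D (Suc j) x) (at x)" if "0 < x" "x < 1" for j x
  proof -
    have "(D j has_real_derivative D (Suc j) x) (at x within {0..1})" using dseqD[OF S] that by auto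
    moreover have "at x within {0..1} = at x" by (rule at_within_interior) (use that in auto)
    ultimately show ?thesis by simp
  qed
  have atP: "(PSI j has_real_derivative PSI (Suc j) x) (at x)" for j x
    using dseqD[OF SP] by simp
  have atF: "(FF j has_real_derivative FF (Suc j) x) (at x)" for j x
    using FF_deriv by simp
  define A where "A = (\<lambda>x. (1 - PSI 0 x) * D 0 x)"
  define B where "B = (\<lambda>x. PSI 0 x * FF 0 x)"
  define A1 where "A1 = (\<lambda>x. - PSI 1 x * D 0 x + (1 - PSI 0 x) * D 1 x)"
  define B1 where "B1 = (\<lambda>x. PSI 1 x * FF 0 x + PSI 0 x * FF 1 x)"
  define Fq where "Fq = (\<lambda>x. A x / B x)"
  define F1 where "F1 = (\<lambda>x. (A1 x * B x - A x * B1 x) / (B x)^2)"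
  define S0 where "S0 = {0<..<2*a}"
  have Bpos: "B x > 0" if "x \<in> S0" for x
    using that PSI_pos FF_pos by (auto simp: B_def S0_def)
  have derFq: "(Fq has_real_derivative F1 x) (at x within S0)" if "x \<in> S0" for x
  proof -
    have x: "0 < x" "x < 1" using that a by (auto simp: S0_def)
    have "(A has_real_derivative A1 x) (at x)"
      unfolding A_def A1_def
      by (auto intro!: derivative_eq_intros atD[OF x] atP simp: numeral_2_eq_2)
    moreover have "(B has_real_derivative B1 x) (at x)"
      unfolding B_def B1_def
      by (auto intro!: derivative_eq_intros atF atP simp: numeral_2_eq_2)
    ultimately have "((\<lambda>x. A x / B x) has_real_derivative (A1 x * B x - A x * B1 x) / (B x * B x)) (at x)"
      using Bpos[OF that] by (intro DERIV_divide) auto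
    then show ?thesis unfolding Fq_def F1_def by (simp add: power2_eq_square has_field_derivative_at_within)
  qed
  have negl: "negligible (Fq ` {x\<in>S0. F1 x = 0})"
    by (rule sard1) (rule derFq)
  have "\<not> {-7/4..-5/4::real} \<subseteq> Fq ` {x\<in>S0. F1 x = 0}"
  proof
    assume "{-7/4..-5/4::real} \<subseteq> Fq ` {x\<in>S0. F1 x = 0}"
    then have "negligible {-7/4..-5/4::real}" using negl negligible_subset by blast
    then show False using negligible_interval(1)[of "-7/4::real" "-5/4"] by simp
  qed
  then obtain s where s: "s \<in> {-7/4..-5/4}" "s \<notin> Fq ` {x\<in>S0. F1 x = 0}" by blast
  define t where "t = - s"
  have t: "1 \<le> t" "t \<le> 2" "- t \<notin> Fq ` {x\<in>S0. F1 x = 0}" using s by (auto simp: t_def)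
  define D' where "D' = (\<lambda>j x. D j x + (\<Sum>i = 0..j. real (j choose i) * PSI i x * (t * FF (j - i) x - D (j - i) x)))"
  have SD': "dseq {0..1} D'"
    unfolding D'_def
    by (rule dseq_add[OF S dseq_mult[OF dseq_subset[OF SP] dseq_diff[OF dseq_cmult[OF SF] S]]]) auto
  have hi: "D' j x = D j x" if "x \<ge> 2 * a" for j x
    using that by (simp add: D'_def PSI_hi)
  have D'0: "D' 0 x = A x + t * B x" for x
    by (simp add: D'_def A_def B_def algebra_simps)
  have D'1: "D' 1 x = A1 x + t * B1 x" for x
    by (simp add: D'_def A1_def B1_def algebra_simps)
  show ?thesis
  proof (intro exI[of _ D'] conjI allI ballI impI)
    show "dseq {0..1} D'" by (rule SD')
  next
    fix x :: real assume x: "x \<in> {0<..<1}"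
    show "\<exists>j. D' j x \<noteq> 0"
    proof (cases "x \<ge> 2 * a")
      case True then show ?thesis using nf x hi by metis
    next
      case False
      then have xS: "x \<in> S0" using x by (auto simp: S0_def)
      show ?thesis
      proof (cases "D' 0 x = 0")
        case False then show ?thesis by blast
      next
        case True
        have Bx: "B x > 0" using Bpos[OF xS] .
        have "A x = - t * B x" using True D'0 by simp
        then have "Fq x = - t" using Bx by (simp add: Fq_def)
        then have "F1 x \<noteq> 0" using t(3) xS by force
        moreover have "F1 x * (B x)^2 = B x * (A1 x + t * B1 x)"
        proof -
          have "F1 x * (B x)^2 = A1 x * B x - A x * B1 x" using Bx by (simp add: F1_def)
          also have "\<dots> = B x * (A1 x + t * B1 x)" using \<open>A x = - t * B x\<close> by (simp add: algebra_simps)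
          finally show ?thesis .
        qed
        ultimately have "D' 1 x \<noteq> 0" using Bx D'1 by auto
        then show ?thesis by blast
      qed
    qed
  next
    fix j
    show "D' j 0 = D j 0"
      using a fl PSI_lo[of 0] by (simp add: D'_def FF_nonpos)
  next
    fix j and x :: real assume "x \<in> {1/2..1}"
    then show "D' j x = D j x" using a hi by auto
  next
    show "\<exists>b>0. \<forall>x\<in>{0<..b}. D' 0 x \<noteq> 0"
    proof (intro exI[of _ a] conjI ballI)
      fix x assume x: "x \<in> {0<..a}"
      then have "D' 0 x = t * FF 0 x" using PSI_lo[of x 0] by (simp add: D'_def)
      then show "D' 0 x \<noteq> 0" using x t FF_pos[of x] by auto
    qed (use a in auto)
  next
    fix j x assume j: "j \<le> k" and x: "x \<in> {0..1::real}"
    show "\<bar>D' j x - D j x\<bar> < \<epsilon>"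
    proof (cases "x \<ge> 2 * a")
      case True then show ?thesis using hi e by simp
    next
      case False
      then have x2: "0 \<le> x" "x < 2 * a" using x by auto
      have tb: "\<bar>PSI i x * (t * FF (j - i) x - D (j - i) x)\<bar> \<le> M * K * 2 ^ (k + 1) * a"
        if "i \<le> j" for i
      proof (rule term_bound[where i=i and k=k and m="j - i"])
        show "\<bar>PSI i x\<bar> \<le> (1 / a) ^ i * M" using PSI_bd[of i x] that j x2 by auto
      next
        have "\<bar>t * FF (j - i) x - D (j - i) x\<bar> \<le> 2 * \<bar>FF (j - i) x\<bar> + \<bar>D (j - i) x\<bar>"
        proof -
          have "\<bar>t * FF (j - i) x\<bar> \<le> 2 * \<bar>FF (j - i) x\<bar>"
            using t by (simp add: abs_mult mult_right_mono)
          then show ?thesis using abs_triangle_ineq4[of "t * FF (j - i) x" "D (j - i) x"] by linarith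
        qed
        also have "\<dots> \<le> 2 * (KF * x ^ (k + 1 - (j - i))) + KD * x ^ (k + 1 - (j - i))"
        proof -
          have jk: "j - i \<le> k" using j by simp
          show ?thesis using KF(2)[OF jk x] KD(2)[OF jk x] by linarith
        qed
        finally show "\<bar>t * FF (j - i) x - D (j - i) x\<bar> \<le> K * x ^ (k + 1 - (j - i))"
          by (simp add: K_def algebra_simps)
      next
        show "i + (j - i) \<le> k" using that j by simp
      qed (use a x2 M K in auto)
      have "\<bar>D' j x - D j x\<bar> = \<bar>\<Sum>i = 0..j. real (j choose i) * (PSI i x * (t * FF (j - i) x - D (j - i) x))\<bar>"
        by (simp add: D'_def mult.assoc)
      also have "\<dots> \<le> (\<Sum>i = 0..j. \<bar>real (j choose i) * (PSI i x * (t * FF (j - i) x - D (j - i) x))\<bar>)"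
        by (rule sum_abs)
      also have "\<dots> \<le> (\<Sum>i = 0..j. real (j choose i) * (M * K * 2 ^ (k + 1) * a))"
      proof (rule sum_mono)
        fix i assume "i \<in> {0..j}"
        then have "\<bar>PSI i x * (t * FF (j - i) x - D (j - i) x)\<bar> \<le> M * K * 2 ^ (k + 1) * a" using tb by auto
        then show "\<bar>real (j choose i) * (PSI i x * (t * FF (j - i) x - D (j - i) x))\<bar> \<le> real (j choose i) * (M * K * 2 ^ (k + 1) * a)"
          unfolding abs_mult[of "real (j choose i)"] abs_of_nat by (rule mult_left_mono) simp
      qed
      also have "\<dots> = 2 ^ j * (M * K * 2 ^ (k + 1) * a)"
      proof -
        have "(\<Sum>i = 0..j. real (j choose i)) = 2 ^ j"
          using choose_row_sum[of j] by (simp add: atLeast0AtMost flip: of_nat_sum)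
        then show ?thesis by (simp only: sum_distrib_right[symmetric])
      qed
      also have "\<dots> \<le> C * a"
      proof -
        have "(2::real) ^ j * 2 ^ (k + 1) \<le> 2 ^ k * 2 ^ (k + 1)"
          using j by (intro mult_right_mono power_increasing) auto
        also have "\<dots> \<le> 4 ^ (k + 1)"
          by (simp add: power_add flip: power_mult_distrib)
        finally have p: "(2::real) ^ j * 2 ^ (k + 1) \<le> 4 ^ (k + 1)" .
        have mk: "M * K \<le> (M + 1) * (K + 1)" using M K by (simp add: algebra_simps)
        have "2 ^ j * (M * K * 2 ^ (k + 1) * a) = (2 ^ j * 2 ^ (k + 1)) * (M * K) * a" by (simp add: algebra_simps)
        also have "\<dots> \<le> 4 ^ (k + 1) * ((M + 1) * (K + 1)) * a"
          using p mk M K a by (intro mult_right_mono mult_mono) auto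
        finally show ?thesis by (simp add: C_def algebra_simps)
      qed
      also have "\<dots> < \<epsilon>" using a e by simp
      finally show ?thesis .
    qed
  qed
qed



lemma lemA:
  assumes S: "dseq {0..1} D" and nf: "\<forall>x\<in>{0<..<1}. \<exists>j. D j x \<noteq> 0" and e: "\<epsilon> > 0"
  shows "\<exists>D'. dseq {0..1} D' \<and> (\<forall>x\<in>{0<..<1}. \<exists>j. D' j x \<noteq> 0) \<and> (\<forall>j. D' j 0 = D j 0) \<and>
    (\<forall>j. \<forall>x\<in>{1/2..1}. D' j x = D j x) \<and> (\<exists>b>0. \<forall>x\<in>{0<..b}. D' 0 x \<noteq> 0) \<and>
    (\<forall>j\<le>k. \<forall>x\<in>{0..1}. \<bar>D' j x - D j x\<bar> < \<epsilon>)"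
proof (cases "\<forall>j. D j 0 = 0")
  case True
  then show ?thesis using lemA_flat[OF S nf _ e] by blast
next
  case False
  have "\<exists>b>0. \<forall>x\<in>{0<..b}. D 0 x \<noteq> 0"
  proof (rule ccontr)
    assume c: "\<not> (\<exists>b>0. \<forall>x\<in>{0<..b}. D 0 x \<noteq> 0)"
    have l0: "(0::real) islimpt {y\<in>{0..1}. D 0 y = 0}"
      unfolding islimpt_approachable
    proof (intro allI impI)
      fix r :: real assume r: "r > 0"
      then have "min (r/2) 1 > 0" by simp
      then obtain x where x: "x \<in> {0<..min (r/2) 1}" "D 0 x = 0" using c by blast
      then show "\<exists>x'\<in>{y\<in>{0..1}. D 0 y = 0}. x' \<noteq> 0 \<and> dist x' 0 < r"
        using r by (intro bexI[of _ x]) auto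
    qed
    have "D j 0 = 0" for j by (rule limpt_flat[OF S _ l0]) simp
    then show False using False by blast
  qed
  then show ?thesis using S nf e by (intro exI[of _ D]) auto
qed

definition rfl :: "(nat \<Rightarrow> real \<Rightarrow> real) \<Rightarrow> nat \<Rightarrow> real \<Rightarrow> real" where
  "rfl D j x = (-1) ^ j * D j (1 - x)"

lemma img_refl: "(\<lambda>x::real. 1 - x) ` {0..1} = {0..1}"
proof
  show "(\<lambda>x::real. 1 - x) ` {0..1} \<subseteq> {0..1}" by auto
  show "{0..1} \<subseteq> (\<lambda>x::real. 1 - x) ` {0..1}"
  proof
    fix y :: real assume "y \<in> {0..1}"
    then show "y \<in> (\<lambda>x. 1 - x) ` {0..1}" by (intro image_eqI[of _ _ "1 - y"]) auto
  qed
qed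

lemma dseq_rfl:
  assumes S: "dseq {0..1} D" shows "dseq {0..1} (rfl D)"
  unfolding dseq_def
proof (intro allI ballI)
  fix j and x :: real assume x: "x \<in> {0..1}"
  have "(D j has_real_derivative D (Suc j) (1 - x)) (at ((\<lambda>x. 1 - x) x) within ((\<lambda>x. 1 - x) ` {0..1}))"
    unfolding img_refl using dseqD[OF S] x by auto
  moreover have "((\<lambda>x::real. 1 - x) has_real_derivative -1) (at x within {0..1})"
    by (auto intro!: derivative_eq_intros)
  ultimately have "(D j \<circ> (\<lambda>x. 1 - x) has_real_derivative D (Suc j) (1 - x) * -1) (at x within {0..1})"
    by (rule DERIV_image_chain)
  then have "((\<lambda>x. D j (1 - x)) has_real_derivative D (Suc j) (1 - x) * -1) (at x within {0..1})"
    by (simp add: o_def)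
  then have "((\<lambda>x. (-1) ^ j * D j (1 - x)) has_real_derivative (-1) ^ j * (D (Suc j) (1 - x) * -1)) (at x within {0..1})"
    by (rule DERIV_cmult)
  then show "(rfl D j has_real_derivative rfl D (Suc j) x) (at x within {0..1})"
    unfolding rfl_def[abs_def] by simp
qed

lemma rfl_rfl: "rfl (rfl D) j x = D j x"
proof -
  have "((-1::real) ^ j) * ((-1) ^ j) = 1"
    by (simp flip: power_mult_distrib)
  then show ?thesis by (simp add: rfl_def mult.assoc[symmetric])
qed

lemma abs_rfl: "\<bar>rfl D j x\<bar> = \<bar>D j (1 - x)\<bar>"
  by (simp add: rfl_def abs_mult)

theorem lemma4p9:
  fixes nu :: "real \<Rightarrow> real" and D :: "nat \<Rightarrow> real \<Rightarrow> real"
  assumes "smooth_derivs_01 nu D"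
    and "\<forall>x\<in>{0<..<1}. \<not> inf_flat_at D x"
  shows "\<forall>\<epsilon>>0. \<forall>k::nat. \<exists>nu' D'. smooth_derivs_01 nu' D' \<and>
           (\<forall>x\<in>{0<..<1}. \<not> inf_flat_at D' x) \<and>
           (\<forall>j. D' j 0 = D j 0 \<and> D' j 1 = D j 1) \<and>
           finite {x\<in>{0..1}. nu' x = 0} \<and>
           (\<forall>j\<le>k. \<forall>x\<in>{0..1}. \<bar>D' j x - D j x\<bar> < \<epsilon>)"
proof (intro allI impI)
  fix \<epsilon> :: real and k :: nat assume e: "\<epsilon> > 0"
  have S: "dseq {0..1} D" using assms(1) by (simp add: smooth_derivs_01_def dseq_def)
  have nf: "\<forall>x\<in>{0<..<1}. \<exists>j. D j x \<noteq> 0" using assms(2) by (simp add: inf_flat_at_def)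
  have e2: "\<epsilon> / 2 > 0" using e by simp
  obtain D1 where D1: "dseq {0..1} D1" "\<forall>x\<in>{0<..<1}. \<exists>j. D1 j x \<noteq> 0" "\<forall>j. D1 j 0 = D j 0"
    "\<forall>j. \<forall>x\<in>{1/2..1}. D1 j x = D j x" "\<exists>b>0. \<forall>x\<in>{0<..b}. D1 0 x \<noteq> 0"
    "\<forall>j\<le>k. \<forall>x\<in>{0..1}. \<bar>D1 j x - D j x\<bar> < \<epsilon> / 2"
    using lemA[OF S nf e2, of k] by blast
  obtain b1 where b1: "b1 > 0" "\<forall>x\<in>{0<..b1}. D1 0 x \<noteq> 0" using D1(5) by blast
  define R where "R = rfl D1"
  have SR: "dseq {0..1} R" unfolding R_def by (rule dseq_rfl[OF D1(1)])
  have nfR: "\<forall>x\<in>{0<..<1}. \<exists>j. R j x \<noteq> 0"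
  proof
    fix x :: real assume "x \<in> {0<..<1}"
    then have "1 - x \<in> {0<..<1}" by auto
    then obtain j where "D1 j (1 - x) \<noteq> 0" using D1(2) by blast
    then show "\<exists>j. R j x \<noteq> 0" by (auto simp: R_def rfl_def)
  qed
  obtain E where E: "dseq {0..1} E" "\<forall>x\<in>{0<..<1}. \<exists>j. E j x \<noteq> 0" "\<forall>j. E j 0 = R j 0"
    "\<forall>j. \<forall>x\<in>{1/2..1}. E j x = R j x" "\<exists>b>0. \<forall>x\<in>{0<..b}. E 0 x \<noteq> 0"
    "\<forall>j\<le>k. \<forall>x\<in>{0..1}. \<bar>E j x - R j x\<bar> < \<epsilon> / 2"
    using lemA[OF SR nfR e2, of k] by blast
  obtain b2 where b2: "b2 > 0" "\<forall>x\<in>{0<..b2}. E 0 x \<noteq> 0" using E(5) by blast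
  define D2 where "D2 = rfl E"
  have SD2: "dseq {0..1} D2" unfolding D2_def by (rule dseq_rfl[OF E(1)])
  have D2_lo: "D2 j x = D1 j x" if "x \<in> {0..1/2}" for j x
  proof -
    have "1 - x \<in> {1/2..1}" using that by auto
    then have "E j (1 - x) = R j (1 - x)" using E(4) by blast
    then show ?thesis by (simp add: D2_def R_def rfl_def[of E] rfl_rfl[of D1, unfolded rfl_def[of "rfl D1"]])
  qed
  have nf2: "\<forall>x\<in>{0<..<1}. \<exists>j. D2 j x \<noteq> 0"
  proof
    fix x :: real assume "x \<in> {0<..<1}"
    then have "1 - x \<in> {0<..<1}" by auto
    then obtain j where "E j (1 - x) \<noteq> 0" using E(2) by blast
    then show "\<exists>j. D2 j x \<noteq> 0" by (auto simp: D2_def rfl_def)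
  qed
  show "\<exists>nu' D'. smooth_derivs_01 nu' D' \<and>
           (\<forall>x\<in>{0<..<1}. \<not> inf_flat_at D' x) \<and>
           (\<forall>j. D' j 0 = D j 0 \<and> D' j 1 = D j 1) \<and>
           finite {x\<in>{0..1}. nu' x = 0} \<and>
           (\<forall>j\<le>k. \<forall>x\<in>{0..1}. \<bar>D' j x - D j x\<bar> < \<epsilon>)"
  proof (intro exI[of _ "D2 0"] exI[of _ D2] conjI allI impI ballI)
    show "smooth_derivs_01 (D2 0) D2" using SD2 by (simp add: smooth_derivs_01_def dseq_def)
  next
    fix x :: real assume "x \<in> {0<..<1}"
    then show "\<not> inf_flat_at D2 x" using nf2 by (auto simp: inf_flat_at_def)
  next
    fix j
    show "D2 j 0 = D j 0" using D2_lo[of 0 j] D1(3) by simp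
  next
    fix j
    have "D2 j 1 = (-1) ^ j * E j 0" by (simp add: D2_def rfl_def)
    also have "\<dots> = (-1) ^ j * R j 0" using E(3) by simp
    also have "\<dots> = rfl R j 1" by (simp add: rfl_def)
    also have "\<dots> = D1 j 1" by (simp add: R_def rfl_rfl)
    also have "\<dots> = D j 1" using D1(4) by simp
    finally show "D2 j 1 = D j 1" .
  next
    show "finite {x\<in>{0..1}. D2 0 x = 0}"
    proof (rule ccontr)
      let ?Z = "{x\<in>{0..1}. D2 0 x = 0}"
      assume "infinite ?Z"
      then obtain x where x: "x \<in> {0..1}" "x islimpt ?Z"
        using compact_eq_Bolzano_Weierstrass[of "{0..1::real}"] by auto
      have fl: "D2 j x = 0" for j by (rule limpt_flat[OF SD2 x])
      consider "x = 0" | "x = 1" | "x \<in> {0<..<1}" using x by fastforce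
      then show False
      proof cases
        case 1
        have "min b1 (1/2) > 0" using b1 by simp
        then obtain y where y: "y \<in> ?Z" "y \<noteq> 0" "dist y 0 < min b1 (1/2)"
          using x(2) 1 islimpt_approachable by blast
        then have "y \<in> {0<..b1}" "y \<in> {0..1/2}" by auto
        then show False using y(1) D2_lo[of y 0] b1(2) by auto
      next
        case 2
        obtain y where y: "y \<in> ?Z" "y \<noteq> 1" "dist y 1 < b2"
          using x(2) 2 islimpt_approachable b2(1) by blast
        then have "1 - y \<in> {0<..b2}" by (auto simp: dist_real_def)
        then have "E 0 (1 - y) \<noteq> 0" using b2(2) by blast
        then show False using y(1) by (simp add: D2_def rfl_def)
      next
        case 3
        then show False using nf2 fl by blast
      qed
    qed
  next
    fix j x assume j: "j \<le> k" and x: "x \<in> {0..1::real}"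
    have "1 - x \<in> {0..1}" using x by auto
    then have "\<bar>E j (1 - x) - R j (1 - x)\<bar> < \<epsilon> / 2" using E(6) j by blast
    moreover have "\<bar>D2 j x - D1 j x\<bar> = \<bar>E j (1 - x) - R j (1 - x)\<bar>"
    proof -
      have "D1 j x = rfl R j x" by (simp add: R_def rfl_rfl)
      then have "D2 j x - D1 j x = (-1) ^ j * (E j (1 - x) - R j (1 - x))"
        by (simp add: D2_def rfl_def[of E] rfl_def[of R] algebra_simps)
      then show ?thesis by (simp add: abs_mult)
    qed
    moreover have "\<bar>D1 j x - D j x\<bar> < \<epsilon> / 2" using D1(6) j x by blast
    ultimately show "\<bar>D2 j x - D j x\<bar> < \<epsilon>" by linarith
  qed
qed


end
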